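(* Let $k_1,k_2,k_5$ be nonzero real constants and consider the equation $$u_t=k_5+\frac{1}{x}\bigl(k_1 x e^{k_2 u} u_x\bigr)_x$$ together with its Lie point symmetry $X=k_2 x\frac{\partial}{\partial x}+2\frac{\partial}{\partial u}$. The invariant solution of this equation corresponding to $X$ is $u(x,t)=\frac{1}{k_2}\ln\left(\frac{x^2}{p(t)}\right)$, where $p(t)$ satisfies the similarity reduction equation $$p'(t)+k_2k_5\,p(t)+4k_1=0,$$ whose solution is $p(t)=-\frac{4k_1}{k_2k_5}+c_1e^{-k_2k_5 t}$ with an arbitrary constant $c_1$.
   Context: A function $u=u(x,t)$ is an invariant solution of the equation corresponding to the infinitesimal symmetry $X=\xi\frac{\partial}{\partial x}+\tau\frac{\partial}{\partial t}+\eta\frac{\partial}{\partial u}$ if and only if (i) $u$ satisfies the equation and (ii) $u$ defines an invariant surface of $X$, i.e. $\xi\frac{\partial u}{\partial x}+\tau\frac{\partial u}{\partial t}-\eta=0$. Here $x>0$ is the cylindrical radial variable. *)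

theory Defs
  imports "HOL-Analysis.Analysis"
begin

definition ux :: "(real \<Rightarrow> real \<Rightarrow> real) \<Rightarrow> real \<Rightarrow> real \<Rightarrow> real" where
  "ux u x t = deriv (\<lambda>y. u y t) x"

definition ut :: "(real \<Rightarrow> real \<Rightarrow> real) \<Rightarrow> real \<Rightarrow> real \<Rightarrow> real" where
  "ut u x t = deriv (\<lambda>s. u x s) t"

definition solves_eq :: "real \<Rightarrow> real \<Rightarrow> real \<Rightarrow> real set \<Rightarrow> (real \<Rightarrow> real \<Rightarrow> real) \<Rightarrow> bool" where
  "solves_eq k1 k2 k5 I u \<longleftrightarrow>
     (\<forall>x>0. \<forall>t\<in>I.
        (\<lambda>y. u y t) differentiable (at x) \<and>
        (\<lambda>s. u x s) differentiable (at t) \<and>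
        (\<lambda>y. k1 * y * exp (k2 * u y t) * ux u y t) differentiable (at x) \<and>
        ut u x t = k5 + (1 / x) * deriv (\<lambda>y. k1 * y * exp (k2 * u y t) * ux u y t) x)"

text \<open>Invariant surface condition  xi u_x + tau u_t - eta = 0  for
  X = xi d/dx + tau d/dt + eta d/du (coefficients depending on x, t, u).\<close>
definition invariant_surface ::
  "(real \<Rightarrow> real \<Rightarrow> real \<Rightarrow> real) \<Rightarrow> (real \<Rightarrow> real \<Rightarrow> real \<Rightarrow> real) \<Rightarrow>
   (real \<Rightarrow> real \<Rightarrow> real \<Rightarrow> real) \<Rightarrow> real set \<Rightarrow> (real \<Rightarrow> real \<Rightarrow> real) \<Rightarrow> bool" where
  "invariant_surface \<xi> \<tau> \<eta> I u \<longleftrightarrow>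
     (\<forall>x>0. \<forall>t\<in>I. \<xi> x t (u x t) * ux u x t + \<tau> x t (u x t) * ut u x t - \<eta> x t (u x t) = 0)"

definition invariant_solution ::
  "real \<Rightarrow> real \<Rightarrow> real \<Rightarrow> (real \<Rightarrow> real \<Rightarrow> real \<Rightarrow> real) \<Rightarrow> (real \<Rightarrow> real \<Rightarrow> real \<Rightarrow> real) \<Rightarrow>
   (real \<Rightarrow> real \<Rightarrow> real \<Rightarrow> real) \<Rightarrow> real set \<Rightarrow> (real \<Rightarrow> real \<Rightarrow> real) \<Rightarrow> bool" where
  "invariant_solution k1 k2 k5 \<xi> \<tau> \<eta> I u \<longleftrightarrow>
     solves_eq k1 k2 k5 I u \<and> invariant_surface \<xi> \<tau> \<eta> I u"

definition reduction_ode :: "real \<Rightarrow> real \<Rightarrow> real \<Rightarrow> real set \<Rightarrow> (real \<Rightarrow> real) \<Rightarrow> bool" where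
  "reduction_ode k1 k2 k5 I p \<longleftrightarrow>
     (\<forall>t\<in>I. \<exists>p'. (p has_real_derivative p') (at t) \<and> p' + k2 * k5 * p t + 4 * k1 = 0)"

end

theory Submission
  imports Defs
begin

lemma ode_part:
  fixes k1 k2 k5 :: real and I :: "real set"
  assumes k2: "k2 \<noteq> 0" and k5: "k5 \<noteq> 0" and oI: "open I" and iI: "is_interval I"
  shows "reduction_ode k1 k2 k5 I p \<longleftrightarrow>
            (\<exists>c1. \<forall>t\<in>I. p t = - (4 * k1) / (k2 * k5) + c1 * exp (- k2 * k5 * t))"
proof
  assume R: "reduction_ode k1 k2 k5 I p"
  define A where "A = - (4 * k1) / (k2 * k5)"
  define g where "g t = (p t - A) * exp (k2 * k5 * t)" for t
  have "(g has_field_derivative 0) (at t within I)" if t: "t \<in> I" for t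
  proof -
    obtain p' where p': "(p has_real_derivative p') (at t)" "p' + k2 * k5 * p t + 4 * k1 = 0"
      using R t unfolding reduction_ode_def by blast
    have "(g has_field_derivative (p' * exp (k2 * k5 * t) + exp (k2 * k5 * t) * (k2 * k5) * (p t - A))) (at t)"
    proof -
      have e: "((\<lambda>t. exp (k2 * k5 * t)) has_real_derivative exp (k2 * k5 * t) * (k2 * k5)) (at t)"
        by (intro derivative_eq_intros) auto
      have pm: "((\<lambda>t. p t - A) has_real_derivative p' - 0) (at t)"
        by (rule DERIV_diff[OF p'(1) DERIV_const])
      show ?thesis unfolding g_def using DERIV_mult[OF pm e] by simp
    qed
    moreover have "p' * exp (k2 * k5 * t) + exp (k2 * k5 * t) * (k2 * k5) * (p t - A) = 0"
    proof -
      have "k2 * k5 * A = - 4 * k1" unfolding A_def using k2 k5 by (simp add: field_simps)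
      then have "p' + (p t - A) * (k2 * k5) = 0" using p'(2) by (simp add: algebra_simps)
      moreover have "p' * exp (k2 * k5 * t) + exp (k2 * k5 * t) * (k2 * k5) * (p t - A) = exp (k2 * k5 * t) * (p' + (p t - A) * (k2 * k5))"
        by (simp add: algebra_simps)
      ultimately show ?thesis by simp
    qed
    ultimately show ?thesis using has_field_derivative_at_within by metis
  qed
  then obtain c where c: "\<forall>t\<in>I. g t = c"
    using has_field_derivative_zero_constant[OF is_interval_convex[OF iI]] by blast
  show "\<exists>c1. \<forall>t\<in>I. p t = - (4 * k1) / (k2 * k5) + c1 * exp (- k2 * k5 * t)"
  proof (intro exI ballI)
    fix t assume t: "t \<in> I"
    have "(p t - A) * exp (k2 * k5 * t) = c" using c t unfolding g_def by auto
    then have "p t - A = c * exp (- (k2 * k5 * t))"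
      by (metis exp_minus_inverse mult.assoc mult.commute mult_1)
    then show "p t = - (4 * k1) / (k2 * k5) + c * exp (- k2 * k5 * t)"
      unfolding A_def by simp
  qed
next
  assume "\<exists>c1. \<forall>t\<in>I. p t = - (4 * k1) / (k2 * k5) + c1 * exp (- k2 * k5 * t)"
  then obtain c1 where c1: "\<forall>t\<in>I. p t = - (4 * k1) / (k2 * k5) + c1 * exp (- k2 * k5 * t)" by blast
  show "reduction_ode k1 k2 k5 I p"
    unfolding reduction_ode_def
  proof
    fix t assume t: "t \<in> I"
    let ?f = "\<lambda>t. - (4 * k1) / (k2 * k5) + c1 * exp (- k2 * k5 * t)"
    have "(?f has_real_derivative (c1 * (exp (- k2 * k5 * t) * (- k2 * k5)))) (at t)"
      by (intro derivative_eq_intros) auto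
    then have "(p has_real_derivative (c1 * (exp (- k2 * k5 * t) * (- k2 * k5)))) (at t)"
      by (rule has_field_derivative_transform_within_open[OF _ oI t]) (use c1 in auto)
    moreover have "c1 * (exp (- k2 * k5 * t) * (- k2 * k5)) + k2 * k5 * p t + 4 * k1 = 0"
    proof -
      have "c1 * (exp (- k2 * k5 * t) * (- k2 * k5)) + k2 * k5 * (- (4 * k1) / (k2 * k5) + c1 * exp (- k2 * k5 * t)) + 4 * k1 = 0"
        using k2 k5 by (simp add: field_simps)
      then show ?thesis using c1 t by simp
    qed
    ultimately show "\<exists>p'. (p has_real_derivative p') (at t) \<and> p' + k2 * k5 * p t + 4 * k1 = 0"
      by blast
  qed
qed

lemma space_part:
  fixes k1 k2 P :: real and v :: "real \<Rightarrow> real"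
  assumes k2: "k2 \<noteq> 0" and P: "P > 0" and v: "\<forall>y>0. v y = (1 / k2) * ln (y\<^sup>2 / P)"
    and x: "x > 0"
  shows "(v has_real_derivative 2 / (k2 * x)) (at x)"
    and "deriv v x = 2 / (k2 * x)"
    and "((\<lambda>y. k1 * y * exp (k2 * v y) * deriv v y) has_real_derivative 4 * k1 * x / (k2 * P)) (at x)"
proof -
  have ve: "v y = (1 / k2) * (2 * ln y - ln P)" if "y > 0" for y
    using v that P by (simp add: ln_div ln_realpow)
  have d: "(v has_real_derivative 2 / (k2 * x)) (at x)" if x: "x > 0" for x
  proof -
    have "((\<lambda>y. (1 / k2) * (2 * ln y - ln P)) has_real_derivative (1 / k2) * (2 * (1 / x) - 0)) (at x)"
      using x k2 by (auto intro!: derivative_eq_intros)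
    then have "((\<lambda>y. (1 / k2) * (2 * ln y - ln P)) has_real_derivative 2 / (k2 * x)) (at x)"
      by simp
    then show ?thesis
      by (rule has_field_derivative_transform_within_open[where S="{0<..}"]) (use x ve in auto)
  qed
  show "(v has_real_derivative 2 / (k2 * x)) (at x)" using d x .
  have dv: "deriv v y = 2 / (k2 * y)" if "y > 0" for y
    using d[OF that] by (rule DERIV_imp_deriv)
  then show "deriv v x = 2 / (k2 * x)" using x .
  have fe: "k1 * y * exp (k2 * v y) * deriv v y = 2 * k1 / (k2 * P) * y\<^sup>2" if y: "y > 0" for y
  proof -
    have e: "exp (k2 * v y) = y\<^sup>2 / P" using v y k2 P by simp
    show ?thesis unfolding e dv[OF y] using y k2 P by (simp add: field_simps power2_eq_square)
  qed
  have "((\<lambda>y. 2 * k1 / (k2 * P) * y\<^sup>2) has_real_derivative 2 * k1 / (k2 * P) * (2 * x)) (at x)"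
    using k2 P by (auto intro!: derivative_eq_intros)
  then have "((\<lambda>y. 2 * k1 / (k2 * P) * y\<^sup>2) has_real_derivative 4 * k1 * x / (k2 * P)) (at x)"
    by (simp add: field_simps)
  then show "((\<lambda>y. k1 * y * exp (k2 * v y) * deriv v y) has_real_derivative 4 * k1 * x / (k2 * P)) (at x)"
    by (rule has_field_derivative_transform_within_open[where S="{0<..}"]) (use x fe in auto)
qed

lemma time_part:
  fixes k2 x :: real and p :: "real \<Rightarrow> real"
  assumes k2: "k2 \<noteq> 0" and x: "x > 0" and I: "open I" "t \<in> I" and pp: "\<forall>s\<in>I. p s > 0"
    and p': "(p has_real_derivative p') (at t)"
  shows "((\<lambda>s. (1 / k2) * ln (x\<^sup>2 / p s)) has_real_derivative - p' / (k2 * p t)) (at t)"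
proof -
  have "((\<lambda>s. (1 / k2) * (ln (x\<^sup>2) - ln (p s))) has_real_derivative (1 / k2) * (0 - p' / p t)) (at t)"
    using p' pp I k2 by (auto intro!: derivative_eq_intros simp: field_simps)
  then have "((\<lambda>s. (1 / k2) * (ln (x\<^sup>2) - ln (p s))) has_real_derivative - p' / (k2 * p t)) (at t)"
    by simp
  then show ?thesis
    by (rule has_field_derivative_transform_within_open[OF _ I]) (use pp x in \<open>auto simp: ln_div\<close>)
qed

lemma main_part:
  fixes k1 k2 k5 :: real and I :: "real set" and u :: "real \<Rightarrow> real \<Rightarrow> real"
  assumes k2: "k2 \<noteq> 0" and oI: "open I"
  shows "invariant_solution k1 k2 k5 (\<lambda>x t v. k2 * x) (\<lambda>x t v. 0) (\<lambda>x t v. 2) I u \<longleftrightarrow>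
            (\<exists>p. (\<forall>t\<in>I. p t > 0) \<and> reduction_ode k1 k2 k5 I p \<and>
                 (\<forall>x>0. \<forall>t\<in>I. u x t = (1 / k2) * ln (x\<^sup>2 / p t)))"
proof
  assume H: "invariant_solution k1 k2 k5 (\<lambda>x t v. k2 * x) (\<lambda>x t v. 0) (\<lambda>x t v. 2) I u"
  then have S: "solves_eq k1 k2 k5 I u" and V: "invariant_surface (\<lambda>x t v. k2 * x) (\<lambda>x t v. 0) (\<lambda>x t v. 2) I u"
    unfolding invariant_solution_def by auto
  define p where "p t = exp (- k2 * u 1 t)" for t
  have ppos: "\<forall>t\<in>I. p t > 0" unfolding p_def by simp
  have uform: "\<forall>x>0. u x t = (1 / k2) * ln (x\<^sup>2 / p t)" if t: "t \<in> I" for t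
  proof -
    have dd: "((\<lambda>y. u y t - (2 / k2) * ln y) has_field_derivative 0) (at y within {0<..})" if y: "y \<in> {0<..}" for y
    proof -
      have y0: "y > 0" using y by simp
      have "ux u y t = 2 / (k2 * y)"
        using V y0 t k2 unfolding invariant_surface_def by (auto simp: field_simps)
      moreover have "((\<lambda>y. u y t) has_real_derivative ux u y t) (at y)"
      proof -
        have "(\<lambda>y. u y t) differentiable (at y)" using S t y0 unfolding solves_eq_def by auto
        then show ?thesis unfolding ux_def by (simp only: DERIV_deriv_iff_real_differentiable[symmetric])
      qed
      ultimately have "((\<lambda>y. u y t) has_real_derivative 2 / (k2 * y)) (at y)" by simp
      then have "((\<lambda>y. u y t - (2 / k2) * ln y) has_real_derivative 2 / (k2 * y) - (2 / k2) * (1 / y)) (at y)"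
        using y0 k2 by (auto intro!: derivative_eq_intros)
      then show ?thesis by (simp add: has_field_derivative_at_within)
    qed
    obtain c where c: "\<forall>y\<in>{0<..}. u y t - (2 / k2) * ln y = c"
      using has_field_derivative_zero_constant[OF convex_real_interval(3) dd] by blast
    have c1: "c = u 1 t" using c by (metis greaterThan_iff ln_one mult_zero_right diff_zero zero_less_one)
    show ?thesis
    proof (intro allI impI)
      fix x :: real assume x: "x > 0"
      have "u x t = (2 / k2) * ln x + u 1 t" using c c1 x by force
      moreover have "ln (x\<^sup>2 / p t) = 2 * ln x + k2 * u 1 t"
        using x unfolding p_def by (simp add: ln_div ln_realpow)
      ultimately show "u x t = (1 / k2) * ln (x\<^sup>2 / p t)" using k2 by (simp add: field_simps)
    qed
  qed
  have ode: "reduction_ode k1 k2 k5 I p"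
    unfolding reduction_ode_def
  proof
    fix t assume t: "t \<in> I"
    have du: "((\<lambda>s. u 1 s) has_real_derivative ut u 1 t) (at t)"
    proof -
      have "(\<lambda>s. u 1 s) differentiable (at t)" using S t unfolding solves_eq_def by auto
      then show ?thesis unfolding ut_def by (simp only: DERIV_deriv_iff_real_differentiable[symmetric])
    qed
    have dp: "(p has_real_derivative exp (- k2 * u 1 t) * (- k2 * ut u 1 t)) (at t)"
      unfolding p_def using du by (auto intro!: derivative_eq_intros)
    have eq: "ut u 1 t = k5 + (1 / 1) * deriv (\<lambda>y. k1 * y * exp (k2 * u y t) * ux u y t) 1"
      using S t unfolding solves_eq_def by auto
    have uf: "\<forall>y>0. u y t = (1 / k2) * ln (y\<^sup>2 / p t)" using uform t by blast
    have "ux u = (\<lambda>y t. deriv (\<lambda>y. u y t) y)" unfolding ux_def by (intro ext) simp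
    then have "deriv (\<lambda>y. k1 * y * exp (k2 * u y t) * ux u y t) 1 = 4 * k1 * 1 / (k2 * p t)"
      using space_part(3)[OF k2 _ uf, of 1 k1] ppos t
      by (auto intro: DERIV_imp_deriv)
    then have eq2: "ut u 1 t = k5 + 4 * k1 / (k2 * p t)" using eq by simp
    have "exp (- k2 * u 1 t) * (- k2 * ut u 1 t) + k2 * k5 * p t + 4 * k1 = 0"
    proof -
      have P: "p t > 0" using ppos t by blast
      have "exp (- k2 * u 1 t) = p t" unfolding p_def ..
      then show ?thesis unfolding eq2 using k2 P by (simp add: field_simps)
    qed
    then show "\<exists>p'. (p has_real_derivative p') (at t) \<and> p' + k2 * k5 * p t + 4 * k1 = 0"
      using dp by blast
  qed
  show "\<exists>p. (\<forall>t\<in>I. p t > 0) \<and> reduction_ode k1 k2 k5 I p \<and>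
                 (\<forall>x>0. \<forall>t\<in>I. u x t = (1 / k2) * ln (x\<^sup>2 / p t))"
    using ppos ode uform by blast
next
  assume "\<exists>p. (\<forall>t\<in>I. p t > 0) \<and> reduction_ode k1 k2 k5 I p \<and>
                 (\<forall>x>0. \<forall>t\<in>I. u x t = (1 / k2) * ln (x\<^sup>2 / p t))"
  then obtain p where ppos: "\<forall>t\<in>I. p t > 0" and ode: "reduction_ode k1 k2 k5 I p"
    and uf: "\<forall>x>0. \<forall>t\<in>I. u x t = (1 / k2) * ln (x\<^sup>2 / p t)" by blast
  have uxe: "ux u = (\<lambda>y t. deriv (\<lambda>y. u y t) y)" unfolding ux_def by (intro ext) simp
  have A: "(\<lambda>y. u y t) differentiable (at x) \<and>
        (\<lambda>s. u x s) differentiable (at t) \<and>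
        (\<lambda>y. k1 * y * exp (k2 * u y t) * ux u y t) differentiable (at x) \<and>
        ut u x t = k5 + (1 / x) * deriv (\<lambda>y. k1 * y * exp (k2 * u y t) * ux u y t) x \<and>
        k2 * x * ux u x t + 0 * ut u x t - 2 = 0"
    if x: "x > 0" and t: "t \<in> I" for x t
  proof -
    have uft: "\<forall>y>0. u y t = (1 / k2) * ln (y\<^sup>2 / p t)" using uf t by blast
    have P: "p t > 0" using ppos t by blast
    note sp = space_part(1,2)[OF k2 P uft x] space_part(3)[OF k2 P uft x, of k1]
    obtain p' where p': "(p has_real_derivative p') (at t)" "p' + k2 * k5 * p t + 4 * k1 = 0"
      using ode t unfolding reduction_ode_def by blast
    have dt0: "((\<lambda>s. (1 / k2) * ln (x\<^sup>2 / p s)) has_real_derivative - p' / (k2 * p t)) (at t)"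
      by (rule time_part[OF k2 x oI t ppos p'(1)])
    have dt: "((\<lambda>s. u x s) has_real_derivative - p' / (k2 * p t)) (at t)"
      by (rule has_field_derivative_transform_within_open[OF dt0 oI t]) (use uf x in auto)
    have utv: "ut u x t = - p' / (k2 * p t)" unfolding ut_def using dt by (rule DERIV_imp_deriv)
    have fl: "((\<lambda>y. k1 * y * exp (k2 * u y t) * ux u y t) has_real_derivative 4 * k1 * x / (k2 * p t)) (at x)"
      using sp(3) unfolding uxe by simp
    have uxv: "ux u x t = 2 / (k2 * x)" using sp(2) unfolding ux_def .
    have "ut u x t = k5 + (1 / x) * (4 * k1 * x / (k2 * p t))"
      unfolding utv using p' k2 x P by (simp add: field_simps)
    moreover have "k2 * x * ux u x t + 0 * ut u x t - 2 = 0" unfolding uxv using k2 x by simp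
    ultimately show ?thesis
      using sp(1) dt fl DERIV_imp_deriv[OF fl] real_differentiable_def
      by (metis (no_types, lifting))
  qed
  show "invariant_solution k1 k2 k5 (\<lambda>x t v. k2 * x) (\<lambda>x t v. 0) (\<lambda>x t v. 2) I u"
    unfolding invariant_solution_def solves_eq_def invariant_surface_def
    using A by blast
qed

theorem theorem4:
  fixes k1 k2 k5 :: real and I :: "real set" and u :: "real \<Rightarrow> real \<Rightarrow> real"
  assumes "k1 \<noteq> 0" and "k2 \<noteq> 0" and "k5 \<noteq> 0"
    and "open I" and "is_interval I" and "I \<noteq> {}"
  shows "(invariant_solution k1 k2 k5 (\<lambda>x t v. k2 * x) (\<lambda>x t v. 0) (\<lambda>x t v. 2) I u \<longleftrightarrow>
            (\<exists>p. (\<forall>t\<in>I. p t > 0) \<and> reduction_ode k1 k2 k5 I p \<and>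
                 (\<forall>x>0. \<forall>t\<in>I. u x t = (1 / k2) * ln (x\<^sup>2 / p t))))
       \<and> (\<forall>p. reduction_ode k1 k2 k5 I p \<longleftrightarrow>
            (\<exists>c1. \<forall>t\<in>I. p t = - (4 * k1) / (k2 * k5) + c1 * exp (- k2 * k5 * t)))"
  using main_part[OF assms(2,4)] ode_part[OF assms(2,3,4,5)] by blast

end
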